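(* For any orientation-preserving homeomorphism $f:\mathbb{S}^1\to\mathbb{S}^1$, the induced map $C(f):C(\mathbb{S}^1)\to C(\mathbb{S}^1)$ satisfies $h_{\mathrm{pol}}(C(f))\le 2$.
   Context: $C(\mathbb{S}^1)$ is the set of all nonempty closed connected subsets of $\mathbb{S}^1$ with the Hausdorff metric $d_H(A,B)=\inf\{\varepsilon>0: A\subset U(B,\varepsilon),\ B\subset U(A,\varepsilon)\}$, $U(A,\varepsilon)=\{x: d(x,A)<\varepsilon\}$; $C(f)(A)=f(A)$. For a continuous map $g:Z\to Z$ of a compact metric space $(Z,\rho)$, define $\rho^g_n(x,y)=\max_{0\le k\le n-1}\rho(g^k(x),g^k(y))$; a finite set $E\subset Z$ is $(n,\varepsilon)$-separated if $\rho^g_n(x,y)\ge\varepsilon$ for all distinct $x,y\in E$; $\mathrm{sep}(n,\varepsilon)$ is the maximal cardinality of such a set; and $h_{\mathrm{pol}}(g)=\lim_{\varepsilon\to0}\limsup_{n\to\infty}\frac{\log \mathrm{sep}(n,\varepsilon)}{\log n}$. *)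

theory Defs
  imports "HOL-Analysis.Analysis"
begin

definition S1 :: "complex set" where
  "S1 = sphere 0 1"

definition orient_pres_homeo :: "(complex \<Rightarrow> complex) \<Rightarrow> bool" where
  "orient_pres_homeo f \<longleftrightarrow>
     (\<exists>g. homeomorphism S1 S1 f g) \<and>
     (\<exists>F :: real \<Rightarrow> real. continuous_on UNIV F \<and> strict_mono F \<and>
        (\<forall>x. F (x + 1) = F x + 1) \<and>
        (\<forall>x. f (cis (2 * pi * x)) = cis (2 * pi * F x)))"

definition Unbhd :: "complex set \<Rightarrow> real \<Rightarrow> complex set" where
  "Unbhd A e = {x. infdist x A < e}"

definition dH :: "complex set \<Rightarrow> complex set \<Rightarrow> real" where
  "dH A B = Inf {e. e > 0 \<and> A \<subseteq> Unbhd B e \<and> B \<subseteq> Unbhd A e}"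

definition CS1 :: "complex set set" where
  "CS1 = {A. A \<subseteq> S1 \<and> A \<noteq> {} \<and> closed A \<and> connected A}"

definition Cmap :: "(complex \<Rightarrow> complex) \<Rightarrow> complex set \<Rightarrow> complex set" where
  "Cmap f A = f ` A"

definition bowen_dist :: "('a \<Rightarrow> 'a \<Rightarrow> real) \<Rightarrow> ('a \<Rightarrow> 'a) \<Rightarrow> nat \<Rightarrow> 'a \<Rightarrow> 'a \<Rightarrow> real" where
  "bowen_dist rho g n x y = (MAX k \<in> {..<n}. rho ((g ^^ k) x) ((g ^^ k) y))"

definition separated_set ::
  "('a \<Rightarrow> 'a \<Rightarrow> real) \<Rightarrow> ('a \<Rightarrow> 'a) \<Rightarrow> nat \<Rightarrow> real \<Rightarrow> 'a set \<Rightarrow> bool" where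
  "separated_set rho g n e E \<longleftrightarrow> finite E \<and>
     (\<forall>x\<in>E. \<forall>y\<in>E. x \<noteq> y \<longrightarrow> bowen_dist rho g n x y \<ge> e)"

definition sep :: "('a \<Rightarrow> 'a \<Rightarrow> real) \<Rightarrow> 'a set \<Rightarrow> ('a \<Rightarrow> 'a) \<Rightarrow> nat \<Rightarrow> real \<Rightarrow> real" where
  "sep rho Z g n e = Sup {real (card E) | E. E \<subseteq> Z \<and> separated_set rho g n e E}"

definition h_pol :: "('a \<Rightarrow> 'a \<Rightarrow> real) \<Rightarrow> 'a set \<Rightarrow> ('a \<Rightarrow> 'a) \<Rightarrow> ereal" where
  "h_pol rho Z g = Lim (at_right 0)
     (\<lambda>e. limsup (\<lambda>n. ereal (ln (sep rho Z g n e) / ln (real n))))"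

end

theory Submission imports Defs begin

lemma cis_lip: "cmod (cis a - cis b) \<le> \<bar>a - b\<bar>"
proof -
  have "(cmod (cis a - cis b))^2 = (cos a - cos b)^2 + (sin a - sin b)^2"
    by (simp add: cmod_def)
  also have "\<dots> = 2 - 2 * cos (a - b)"
    by (simp add: cos_diff power2_eq_square algebra_simps)
  also have "\<dots> = 4 * (sin ((a - b)/2))^2"
  proof -
    have h: "2 * ((a-b)/2) = a - b" by simp
    have "cos (a-b) = 1 - 2*(sin((a-b)/2))^2" using cos_double_sin[of "(a-b)/2"] unfolding h .
    then show ?thesis by linarith
  qed
  also have "\<dots> \<le> 4 * ((a-b)/2)^2"
    using abs_sin_x_le_abs_x[of "(a-b)/2"]
    by (metis abs_ge_zero mult_left_mono power2_abs power_mono zero_le_numeral)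
  also have "\<dots> = \<bar>a - b\<bar>^2" by (simp add: power2_eq_square field_simps)
  finally have "(cmod (cis a - cis b))^2 \<le> \<bar>a - b\<bar>^2" .
  then show ?thesis by (rule power2_le_imp_le) simp
qed

definition e1 :: "real \<Rightarrow> complex" where "e1 x = cis (2 * pi * x)"

lemma e1_lip: "cmod (e1 x - e1 y) \<le> 2 * pi * \<bar>x - y\<bar>"
proof -
  have "cmod (e1 x - e1 y) \<le> \<bar>2*pi*x - 2*pi*y\<bar>" unfolding e1_def by (rule cis_lip)
  also have "\<dots> = 2 * pi * \<bar>x - y\<bar>" by (simp add: abs_mult flip: right_diff_distrib)
  finally show ?thesis .
qed

lemma e1_int: "e1 (x + real_of_int m) = e1 x"
proof -
  have "cis (2*pi*x + 2*pi*real_of_int m) = cis (2*pi*x)"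
    by (simp add: complex_eq_iff cos_add sin_add cos_int_2pin sin_int_2pin)
  then show ?thesis unfolding e1_def by (simp add: distrib_left)
qed

lemma e1_S1: "e1 x \<in> S1" by (simp add: e1_def S1_def)

lemma S1_e1: assumes "z \<in> S1" shows "z = e1 (Arg2pi z / (2*pi))"
  using assms Arg2pi_eq[of z] by (simp add: S1_def e1_def cis_conv_exp)

lemma Arg2pi_bounds: "0 \<le> Arg2pi z / (2*pi)" "Arg2pi z / (2*pi) < 1"
  using Arg2pi_ge_0[of z] Arg2pi_lt_2pi[of z] by auto

lemma S1_eq: "S1 = e1 ` {0..1}"
proof
  show "S1 \<subseteq> e1 ` {0..1}"
  proof
    fix z assume "z \<in> S1"
    then show "z \<in> e1 ` {0..1}" using S1_e1 Arg2pi_bounds[of z]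
      by (intro image_eqI[of _ _ "Arg2pi z / (2*pi)"]) auto
  qed
qed (auto simp: e1_S1)

lemma e1_add: "e1 (x + y) = e1 x * e1 y"
  by (simp add: e1_def cis_mult distrib_left)

lemma CS1_arc:
  assumes "A \<in> CS1"
  shows "\<exists>a L. 0 \<le> a \<and> a < 1 \<and> 0 \<le> L \<and> L \<le> 1 \<and> A = e1 ` {a..a+L}"
proof (cases "A = S1")
  case True
  then show ?thesis using S1_eq by (intro exI[of _ 0] exI[of _ 1]) auto
next
  case False
  have AS: "A \<subseteq> S1" "A \<noteq> {}" "closed A" "connected A" using assms by (auto simp: CS1_def)
  then obtain p where p: "p \<in> S1" "p \<notin> A" using False by blast
  define \<theta> where "\<theta> = Arg2pi p / (2*pi)"
  have pe: "p = e1 \<theta>" using S1_e1[OF p(1)] by (simp add: \<theta>_def)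
  have p0: "p \<noteq> 0" using p(1) by (auto simp: S1_def)
  define h where "h z = \<theta> + Arg2pi (z / p) / (2*pi)" for z
  have nn: "z / p \<notin> \<real>\<^sub>\<ge>\<^sub>0" if "z \<in> S1" "z \<noteq> p" for z
  proof
    assume "z / p \<in> \<real>\<^sub>\<ge>\<^sub>0"
    then obtain r where r: "z / p = of_real r" "r \<ge> 0" by (auto elim: nonneg_Reals_cases)
    have "norm (z / p) = 1" using that p(1) by (simp add: S1_def norm_divide)
    then have "r = 1" using r by simp
    then show False using r that p0 by (simp add: divide_eq_eq)
  qed
  have hS: "e1 (h z) = z" if "z \<in> S1" for z
  proof -
    have "z / p \<in> S1" using that p(1) by (simp add: S1_def norm_divide)
    then have "e1 (Arg2pi (z / p) / (2*pi)) = z / p" using S1_e1 by metis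
    then show ?thesis using p0 by (simp add: h_def e1_add pe[symmetric])
  qed
  have hb: "\<theta> < h z \<and> h z < \<theta> + 1" if "z \<in> S1" "z \<noteq> p" for z
  proof -
    have "Arg2pi (z / p) \<noteq> 0" using nn[OF that] Arg2pi_eq_0[of "z/p"]
      by (auto simp: complex_nonneg_Reals_iff complex_is_Real_iff)
    then have "0 < Arg2pi (z / p)" using Arg2pi_ge_0[of "z/p"] by linarith
    then show ?thesis using Arg2pi_lt_2pi[of "z/p"] by (simp add: h_def)
  qed
  have hc: "continuous_on A h"
  proof -
    have "continuous (at z) (\<lambda>z. Arg2pi (z / p))" if "z \<in> A" for z
      using that AS(1) p nn p0
      by (intro continuous_at_compose[unfolded o_def, OF _ continuous_at_Arg2pi]) (auto intro!: continuous_intros)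
    then have "continuous_on A (\<lambda>z. Arg2pi (z / p))"
      by (simp add: continuous_at_imp_continuous_on)
    then show ?thesis unfolding h_def by (intro continuous_intros) auto
  qed
  have cA: "compact A" using AS(1,3) unfolding S1_def
    by (meson bounded_subset compact_eq_bounded_closed bounded_sphere)
  have "connected (h ` A) \<and> compact (h ` A)"
    using connected_continuous_image[OF hc AS(4)] compact_continuous_image[OF hc cA] by blast
  then obtain c d where cd: "h ` A = {c..d}" using connected_compact_interval_1 by metis
  have "c \<le> d" using cd AS(2) by auto
  have "c \<in> h ` A" "d \<in> h ` A" using cd \<open>c \<le> d\<close> by auto
  then have cdb: "\<theta> < c" "d < \<theta> + 1" using hb AS(1) p(2) by blast+
  have Aeq: "A = e1 ` {c..d}"
  proof -
    have "e1 ` h ` A = A" using hS AS(1) by (force simp: image_image)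
    then show ?thesis using cd by simp
  qed
  define m where "m = floor c"
  define a where "a = c - of_int m"
  have "e1 ` {c..d} = e1 ` {a..a + (d - c)}"
  proof (intro set_eqI iffI)
    fix z assume "z \<in> e1 ` {c..d}"
    then obtain x where x: "x \<in> {c..d}" "z = e1 x" by auto
    have "e1 (x - of_int m) = e1 x" using e1_int[of "x - of_int m" m] by simp
    then show "z \<in> e1 ` {a..a + (d - c)}" using x
      by (intro image_eqI[of _ _ "x - of_int m"]) (auto simp: a_def)
  next
    fix z assume "z \<in> e1 ` {a..a + (d - c)}"
    then obtain y where y: "y \<in> {a..a + (d - c)}" "z = e1 y" by auto
    then show "z \<in> e1 ` {c..d}"
      by (intro image_eqI[of _ _ "y + of_int m"]) (auto simp: a_def e1_int)
  qed
  moreover have "0 \<le> a" "a < 1" unfolding a_def m_def by linarith+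
  ultimately show ?thesis using Aeq \<open>c \<le> d\<close> cdb
    by (intro exI[of _ a] exI[of _ "d - c"]) auto
qed

locale lifted =
  fixes f :: "complex \<Rightarrow> complex" and F :: "real \<Rightarrow> real"
  assumes Fmono: "strict_mono F" and Fper: "\<And>x. F (x + 1) = F x + 1"
    and Flift: "\<And>x. f (cis (2 * pi * x)) = cis (2 * pi * F x)"
begin

lemma iter_lift: "(f ^^ k) (e1 x) = e1 ((F ^^ k) x)"
  by (induction k) (auto simp: e1_def Flift)

lemma iter_mono: "x \<le> y \<Longrightarrow> (F ^^ k) x \<le> (F ^^ k) y"
proof (induction k)
  case (Suc k)
  then show ?case using Fmono by (auto simp: strict_mono_less_eq)
qed simp

lemma iter_per: "(F ^^ k) (x + 1) = (F ^^ k) x + 1"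
  by (induction k) (auto simp: Fper)

lemma iter_per2: "(F ^^ k) (x + 2) = (F ^^ k) x + 2"
  using iter_per[of k "x+1"] iter_per[of k x] by (simp add: add.assoc)

end


lemma Cmap_iter: "(Cmap f ^^ k) A = (f ^^ k) ` A"
  by (induction k) (auto simp: Cmap_def image_comp)

lemma interval_close:
  fixes G :: "real \<Rightarrow> real"
  assumes G: "\<And>x y. x \<le> y \<Longrightarrow> G x \<le> G y"
    and "a' \<le> b'" "\<bar>G a - G a'\<bar> < d" "\<bar>G b - G b'\<bar> < d" "x \<in> {a..b}"
  shows "\<exists>y\<in>{a'..b'}. \<bar>G x - G y\<bar> < d"
proof (cases "x < a'")
  case True
  then have "G a \<le> G x" "G x \<le> G a'" using assms G by auto
  then have "\<bar>G x - G a'\<bar> < d" using assms(3) by arith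
  then show ?thesis using assms by (intro bexI[of _ a']) auto
next
  case False
  show ?thesis
  proof (cases "x > b'")
    case True
    then have "G b' \<le> G x" "G x \<le> G b" using assms G by auto
    then have "\<bar>G x - G b'\<bar> < d" using assms(4) by arith
    then show ?thesis using assms by (intro bexI[of _ b']) auto
  next
    case False
    then show ?thesis using \<open>\<not> x < a'\<close> assms by (intro bexI[of _ x]) auto
  qed
qed

lemma dH_le:
  assumes "r > 0" "X \<subseteq> Unbhd Y r" "Y \<subseteq> Unbhd X r"
  shows "dH X Y \<le> r"
  unfolding dH_def
  by (rule cInf_lower) (use assms in \<open>auto intro!: bdd_belowI[of _ 0]\<close>)

lemma infdist_close:
  assumes "\<And>z. z \<in> X \<Longrightarrow> \<exists>w\<in>Y. dist z w < r"
  shows "X \<subseteq> Unbhd Y r"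
proof
  fix z assume "z \<in> X"
  then obtain w where "w \<in> Y" "dist z w < r" using assms by blast
  then show "z \<in> Unbhd Y r" unfolding Unbhd_def using infdist_le[of w Y z] by auto
qed

lemma floor_close:
  fixes N u v :: real
  assumes "N > 0" "\<lfloor>N * u\<rfloor> = \<lfloor>N * v\<rfloor>"
  shows "\<bar>u - v\<bar> < 1 / N"
proof -
  have "\<bar>N * u - N * v\<bar> < 1"
  proof -
    have "of_int \<lfloor>N * u\<rfloor> \<le> N * u \<and> N * u < of_int (\<lfloor>N * u\<rfloor> + 1)" by (rule floor_correct)
    moreover have "of_int \<lfloor>N * v\<rfloor> \<le> N * v \<and> N * v < of_int (\<lfloor>N * v\<rfloor> + 1)" by (rule floor_correct)
    ultimately show ?thesis using assms(2) by (simp add: abs_less_iff) linarith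
  qed
  then have "N * \<bar>u - v\<bar> < 1" using assms(1) by (simp add: abs_mult flip: right_diff_distrib)
  then show ?thesis using assms(1) by (simp add: field_simps)
qed

context lifted
begin

definition sc :: "nat \<Rightarrow> nat \<Rightarrow> real \<Rightarrow> int" where
  "sc N n x = (\<Sum>k<n. \<lfloor>real N * (F ^^ k) x\<rfloor>)"

lemma sc_mono: "x \<le> y \<Longrightarrow> sc N n x \<le> sc N n y"
  unfolding sc_def by (intro sum_mono floor_mono mult_left_mono iter_mono) auto

lemma sc_eq_aux:
  assumes "x \<le> y" "sc N n x = sc N n y" "k < n"
  shows "\<lfloor>real N * (F ^^ k) x\<rfloor> = \<lfloor>real N * (F ^^ k) y\<rfloor>"
proof (rule ccontr)
  assume ne: "\<lfloor>real N * (F ^^ k) x\<rfloor> \<noteq> \<lfloor>real N * (F ^^ k) y\<rfloor>"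
  have le: "\<And>j. \<lfloor>real N * (F ^^ j) x\<rfloor> \<le> \<lfloor>real N * (F ^^ j) y\<rfloor>"
    using assms(1) by (intro floor_mono mult_left_mono iter_mono) auto
  have "sc N n x < sc N n y" unfolding sc_def
  proof (rule sum_strict_mono_ex1)
    show "finite {..<n}" by simp
    show "\<forall>j\<in>{..<n}. \<lfloor>real N * (F ^^ j) x\<rfloor> \<le> \<lfloor>real N * (F ^^ j) y\<rfloor>" using le by blast
    have "\<lfloor>real N * (F ^^ k) x\<rfloor> < \<lfloor>real N * (F ^^ k) y\<rfloor>" using le[of k] ne by linarith
    then show "\<exists>j\<in>{..<n}. \<lfloor>real N * (F ^^ j) x\<rfloor> < \<lfloor>real N * (F ^^ j) y\<rfloor>"
      using assms(3) by blast
  qed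
  then show False using assms(2) by simp
qed

lemma sc_eq:
  assumes "sc N n x = sc N n y" "k < n" "N > 0"
  shows "\<bar>(F ^^ k) x - (F ^^ k) y\<bar> < 1 / N"
proof -
  have "\<lfloor>real N * (F ^^ k) x\<rfloor> = \<lfloor>real N * (F ^^ k) y\<rfloor>"
  proof (cases "x \<le> y")
    case True
    show ?thesis by (rule sc_eq_aux[OF True assms(1,2)])
  next
    case False
    then have "y \<le> x" by simp
    then show ?thesis using sc_eq_aux[OF \<open>y \<le> x\<close> assms(1)[symmetric] assms(2)] by simp
  qed
  then show ?thesis using floor_close[of "real N" "(F ^^ k) x" "(F ^^ k) y"] assms(3) by simp
qed

lemma sc_range:
  assumes "0 \<le> x" "x \<le> 2"
  shows "sc N n x \<in> {sc N n 0 .. sc N n 0 + 2 * int N * int n}"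
proof -
  have "sc N n 2 = (\<Sum>k<n. \<lfloor>real N * (F ^^ k) 0\<rfloor> + 2 * int N)"
    unfolding sc_def
  proof (intro sum.cong refl)
    fix k
    have "real N * (F ^^ k) 2 = real N * (F ^^ k) 0 + of_int (2 * int N)"
      using iter_per2[of k 0] by (simp add: distrib_left)
    then show "\<lfloor>real N * (F ^^ k) 2\<rfloor> = \<lfloor>real N * (F ^^ k) 0\<rfloor> + 2 * int N"
      by (simp only: floor_add_int)
  qed
  also have "\<dots> = sc N n 0 + 2 * int N * int n" by (simp add: sc_def sum.distrib)
  finally show ?thesis using sc_mono[of 0 x N n] sc_mono[of x 2 N n] assms by auto
qed

definition rep :: "complex set \<Rightarrow> real \<times> real" where
  "rep A = (SOME p. 0 \<le> fst p \<and> fst p < 1 \<and> 0 \<le> snd p \<and> snd p \<le> 1 \<and> A = e1 ` {fst p..fst p + snd p})"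

lemma rep:
  assumes "A \<in> CS1"
  shows "0 \<le> fst (rep A) \<and> fst (rep A) < 1 \<and> 0 \<le> snd (rep A) \<and> snd (rep A) \<le> 1 \<and>
         A = e1 ` {fst (rep A)..fst (rep A) + snd (rep A)}"
proof -
  obtain a L where "0 \<le> a \<and> a < 1 \<and> 0 \<le> L \<and> L \<le> 1 \<and> A = e1 ` {a..a+L}"
    using CS1_arc[OF assms] by blast
  then have "\<exists>p. 0 \<le> fst p \<and> fst p < 1 \<and> 0 \<le> snd p \<and> snd p \<le> 1 \<and> A = e1 ` {fst p..fst p + snd p}"
    by (intro exI[of _ "(a, L)"]) simp
  then show ?thesis unfolding rep_def by (rule someI_ex)
qed

definition code :: "nat \<Rightarrow> nat \<Rightarrow> complex set \<Rightarrow> int \<times> int" where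
  "code N n A = (sc N n (fst (rep A)), sc N n (fst (rep A) + snd (rep A)))"

lemma iter_image: "(f ^^ k) ` (e1 ` {a..b}) = (\<lambda>x. e1 ((F ^^ k) x)) ` {a..b}"
  by (auto simp: image_comp iter_lift)

lemma arc_half:
  assumes "a \<le> b" "a' \<le> b'" "\<bar>(F ^^ k) a - (F ^^ k) a'\<bar> < 1/N" "\<bar>(F ^^ k) b - (F ^^ k) b'\<bar> < 1/N"
  shows "(f ^^ k) ` (e1 ` {a..b}) \<subseteq> Unbhd ((f ^^ k) ` (e1 ` {a'..b'})) (2 * pi / N)"
proof (rule infdist_close)
  fix z assume "z \<in> (f ^^ k) ` e1 ` {a..b}"
  then obtain x where x: "x \<in> {a..b}" "z = e1 ((F ^^ k) x)" by (auto simp: iter_image)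
  obtain y where y: "y \<in> {a'..b'}" "\<bar>(F ^^ k) x - (F ^^ k) y\<bar> < 1/N"
    using interval_close[of "F ^^ k", OF iter_mono assms(2-4) x(1)] by blast
  have "dist z (e1 ((F ^^ k) y)) \<le> 2 * pi * \<bar>(F ^^ k) x - (F ^^ k) y\<bar>"
    using e1_lip x(2) by (simp add: dist_norm)
  also have "\<dots> < 2 * pi * (1 / N)" using y(2) by (intro mult_strict_left_mono) auto
  finally show "\<exists>w\<in>(f ^^ k) ` e1 ` {a'..b'}. dist z w < 2 * pi / N"
    using y(1) by (intro bexI[of _ "e1 ((F ^^ k) y)"]) (auto simp: iter_image)
qed

lemma code_close:
  assumes "A \<in> CS1" "B \<in> CS1" "code N n A = code N n B" "N > 0" "k < n"
  shows "dH ((Cmap f ^^ k) A) ((Cmap f ^^ k) B) \<le> 2 * pi / N"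
proof -
  define a where "a = fst (rep A)"
  define b where "b = fst (rep A) + snd (rep A)"
  define a' where "a' = fst (rep B)"
  define b' where "b' = fst (rep B) + snd (rep B)"
  have A: "A = e1 ` {a..b}" "a \<le> b" using rep[OF assms(1)] by (auto simp: a_def b_def)
  have B: "B = e1 ` {a'..b'}" "a' \<le> b'" using rep[OF assms(2)] by (auto simp: a'_def b'_def)
  have sa: "sc N n a = sc N n a'" "sc N n b = sc N n b'"
    using assms(3) by (auto simp: code_def a_def b_def a'_def b'_def)
  have c1: "\<bar>(F ^^ k) a - (F ^^ k) a'\<bar> < 1/N" "\<bar>(F ^^ k) b - (F ^^ k) b'\<bar> < 1/N"
    using sc_eq[OF sa(1) assms(5,4)] sc_eq[OF sa(2) assms(5,4)] by auto
  have c2: "\<bar>(F ^^ k) a' - (F ^^ k) a\<bar> < 1/N" "\<bar>(F ^^ k) b' - (F ^^ k) b\<bar> < 1/N"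
    using c1 by (auto simp: abs_minus_commute)
  show ?thesis unfolding Cmap_iter A(1) B(1)
    by (rule dH_le[OF _ arc_half[OF A(2) B(2) c1] arc_half[OF B(2) A(2) c2]]) (use assms(4) in simp)
qed

end

lemma S1_CS1: "S1 \<in> CS1"
  by (auto simp: CS1_def S1_def connected_sphere)


lemma bowen_le:
  assumes "n \<ge> 1" "\<And>k. k < n \<Longrightarrow> rho ((g ^^ k) x) ((g ^^ k) y) \<le> r"
  shows "bowen_dist rho g n x y \<le> r"
proof -
  have "0 \<in> {..<n}" using assms(1) by simp
  then have "{..<n} \<noteq> {}" by blast
  then show ?thesis unfolding bowen_dist_def using assms(2) by (subst Max_le_iff) auto
qed

context lifted
begin

lemma card_bound:
  assumes "e > 0"
  obtains C :: real where "C \<ge> 1" and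
    "\<And>n E. n \<ge> 1 \<Longrightarrow> E \<subseteq> CS1 \<Longrightarrow> separated_set dH (Cmap f) n e E \<Longrightarrow> real (card E) \<le> C * (real n)^2"
proof -
  obtain N :: nat where N: "2 * pi / e < real N" using reals_Archimedean2 by blast
  have "0 < 2 * pi / e" using assms by simp
  then have N0: "N > 0" using N by linarith
  have Ne: "2 * pi / N < e" using N assms N0 by (simp add: field_simps)
  have main: "real (card E) \<le> (3 * real N)^2 * (real n)^2"
    if n: "n \<ge> 1" and E: "E \<subseteq> CS1" "separated_set dH (Cmap f) n e E" for n E
  proof -
    have fin: "finite E" using E(2) by (simp add: separated_set_def)
    have inj: "inj_on (code N n) E"
    proof (rule inj_onI, rule ccontr)
      fix A B assume AB: "A \<in> E" "B \<in> E" "code N n A = code N n B" "A \<noteq> B"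
      then have ge: "bowen_dist dH (Cmap f) n A B \<ge> e" using E(2) by (auto simp: separated_set_def)
      have "bowen_dist dH (Cmap f) n A B \<le> 2 * pi / N"
        by (rule bowen_le[OF n]) (use code_close AB E(1) N0 in blast)
      then show False using ge Ne by linarith
    qed
    define I where "I = {sc N n 0 .. sc N n 0 + 2 * int N * int n}"
    have sub: "code N n ` E \<subseteq> I \<times> I"
    proof
      fix c assume "c \<in> code N n ` E"
      then obtain A where A: "A \<in> E" "c = code N n A" by blast
      then have "A \<in> CS1" using E(1) by blast
      from rep[OF this] show "c \<in> I \<times> I" unfolding A(2) code_def I_def
        using sc_range[of "fst (rep A)" N n] sc_range[of "fst (rep A) + snd (rep A)" N n]
        by auto
    qed
    have "card E = card (code N n ` E)" using card_image[OF inj] by simp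
    also have "\<dots> \<le> card (I \<times> I)" by (rule card_mono[OF _ sub]) (simp add: I_def)
    also have "\<dots> = (2 * N * n + 1)^2"
    proof -
      have "card I = nat (2 * int N * int n + 1)" unfolding I_def by (simp add: card_atLeastAtMost_int)
      also have "\<dots> = 2 * N * n + 1" by (simp add: nat_add_distrib nat_mult_distrib)
      finally show ?thesis by (simp add: card_cartesian_product power2_eq_square)
    qed
    finally have "real (card E) \<le> real ((2 * N * n + 1)^2)" by (simp only: of_nat_le_iff)
    also have "real ((2 * N * n + 1)^2) = (2 * real N * real n + 1)^2" by simp
    finally have "real (card E) \<le> (2 * real N * real n + 1)^2" .
    also have "\<dots> \<le> (3 * real N * real n)^2"
    proof -
      have "1 \<le> real N" "1 \<le> real n" using N0 n by auto
      then have "1 \<le> real N * real n" using mult_mono[of 1 "real N" 1 "real n"] by simp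
      then show ?thesis by (intro power_mono) auto
    qed
    also have "\<dots> = (3 * real N)^2 * (real n)^2" by (simp add: power_mult_distrib)
    finally show ?thesis .
  qed
  have "1 \<le> 3 * real N" using N0 by simp
  then have "1 \<le> (3 * real N)^2" using one_le_power[of "3 * real N" 2] by blast
  then show ?thesis using that main by blast
qed

definition SS :: "real \<Rightarrow> nat \<Rightarrow> real set" where
  "SS e n = {real (card E) | E. E \<subseteq> CS1 \<and> separated_set dH (Cmap f) n e E}"

lemma SS_props:
  assumes "e > 0" "n \<ge> 1"
  shows "1 \<in> SS e n" "bdd_above (SS e n)"
proof -
  have "separated_set dH (Cmap f) n e {S1}" by (simp add: separated_set_def)
  then show "1 \<in> SS e n" unfolding SS_def using S1_CS1 by (intro CollectI exI[of _ "{S1}"]) auto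
  obtain C where "\<And>n E. n \<ge> 1 \<Longrightarrow> E \<subseteq> CS1 \<Longrightarrow> separated_set dH (Cmap f) n e E \<Longrightarrow> real (card E) \<le> C * (real n)^2"
    using card_bound[OF assms(1)] by blast
  then show "bdd_above (SS e n)" unfolding SS_def using assms(2) by (intro bdd_aboveI[of _ "C * (real n)^2"]) auto
qed

lemma sep_eq: "sep dH CS1 (Cmap f) n e = Sup (SS e n)"
  by (simp add: sep_def SS_def)

lemma sep_ge1: "e > 0 \<Longrightarrow> n \<ge> 1 \<Longrightarrow> 1 \<le> sep dH CS1 (Cmap f) n e"
  unfolding sep_eq using SS_props by (intro cSup_upper) auto

lemma sep_mono:
  assumes "0 < e" "e \<le> e'" "n \<ge> 1"
  shows "sep dH CS1 (Cmap f) n e' \<le> sep dH CS1 (Cmap f) n e"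
proof -
  have "SS e' n \<subseteq> SS e n"
  proof
    fix x assume "x \<in> SS e' n"
    then obtain E where E: "x = real (card E)" "E \<subseteq> CS1" "separated_set dH (Cmap f) n e' E"
      unfolding SS_def by blast
    then have "separated_set dH (Cmap f) n e E" using assms(2)
      unfolding separated_set_def by (meson order.trans)
    then show "x \<in> SS e n" unfolding SS_def using E by blast
  qed
  moreover have "SS e' n \<noteq> {}" using SS_props(1)[of e' n] assms by auto
  ultimately show ?thesis unfolding sep_eq using SS_props(2)[OF assms(1,3)]
    by (intro cSup_subset_mono) auto
qed

lemma sep_upper:
  assumes "e > 0"
  obtains C where "C \<ge> 1" "\<And>n. n \<ge> 1 \<Longrightarrow> sep dH CS1 (Cmap f) n e \<le> C * (real n)^2"
proof -
  obtain C where C: "C \<ge> 1" "\<And>n E. n \<ge> 1 \<Longrightarrow> E \<subseteq> CS1 \<Longrightarrow> separated_set dH (Cmap f) n e E \<Longrightarrow> real (card E) \<le> C * (real n)^2"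
    using card_bound[OF assms] by blast
  have "sep dH CS1 (Cmap f) n e \<le> C * (real n)^2" if "n \<ge> 1" for n
    unfolding sep_eq using SS_props[OF assms that] C(2)[OF that]
    by (intro cSup_least) (auto simp: SS_def)
  then show ?thesis using that C(1) by blast
qed

end


lemma ln_over_ln_tendsto: "((\<lambda>n. ereal (2 + c / ln (real n))) \<longlongrightarrow> ereal 2) sequentially"
proof -
  have "filterlim (\<lambda>n. ln (real n)) at_top sequentially"
    by (rule filterlim_compose[OF ln_at_top filterlim_real_sequentially])
  then have "((\<lambda>n. c / ln (real n)) \<longlongrightarrow> 0) sequentially"
    by (intro tendsto_divide_0[OF tendsto_const] filterlim_at_top_imp_at_infinity)
  then have "((\<lambda>n. 2 + c / ln (real n)) \<longlongrightarrow> 2 + 0) sequentially"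
    by (intro tendsto_add tendsto_const)
  then show ?thesis by (simp add: lim_ereal)
qed

context lifted
begin

definition phi :: "real \<Rightarrow> ereal" where
  "phi e = limsup (\<lambda>n. ereal (ln (sep dH CS1 (Cmap f) n e) / ln (real n)))"

lemma phi_le2:
  assumes "e > 0"
  shows "phi e \<le> 2"
proof -
  obtain C where C: "C \<ge> 1" "\<And>n. n \<ge> 1 \<Longrightarrow> sep dH CS1 (Cmap f) n e \<le> C * (real n)^2"
    using sep_upper[OF assms] by blast
  have ev: "eventually (\<lambda>n. ereal (ln (sep dH CS1 (Cmap f) n e) / ln (real n)) \<le> ereal (2 + ln C / ln (real n))) sequentially"
    using eventually_ge_at_top[of 2]
  proof eventually_elim
    case (elim n)
    then have n1: "n \<ge> 1" by simp
    have lnpos: "ln (real n) > 0" using elim by simp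
    have s1: "sep dH CS1 (Cmap f) n e \<ge> 1" using sep_ge1[OF assms n1] .
    have "ln (sep dH CS1 (Cmap f) n e) \<le> ln (C * (real n)^2)"
      using s1 C(1) C(2)[OF n1] n1 by (subst ln_le_cancel_iff) auto
    also have "\<dots> = ln C + 2 * ln (real n)" using C(1) n1 by (simp add: ln_mult ln_realpow)
    finally have "ln (sep dH CS1 (Cmap f) n e) / ln (real n) \<le> (ln C + 2 * ln (real n)) / ln (real n)"
      using lnpos by (intro divide_right_mono) auto
    also have "\<dots> = 2 + ln C / ln (real n)" using lnpos by (simp add: field_simps)
    finally show ?case by simp
  qed
  have "phi e \<le> limsup (\<lambda>n. ereal (2 + ln C / ln (real n)))"
    unfolding phi_def by (rule Limsup_mono[OF ev])
  also have "\<dots> = 2" using lim_imp_Limsup[OF trivial_limit_sequentially ln_over_ln_tendsto] by simp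
  finally show ?thesis .
qed

lemma phi_anti:
  assumes "0 < e" "e \<le> e'"
  shows "phi e' \<le> phi e"
  unfolding phi_def
proof (rule Limsup_mono)
  show "eventually (\<lambda>n. ereal (ln (sep dH CS1 (Cmap f) n e') / ln (real n)) \<le> ereal (ln (sep dH CS1 (Cmap f) n e) / ln (real n))) sequentially"
    using eventually_ge_at_top[of 1]
  proof eventually_elim
    case (elim n)
    have s1: "sep dH CS1 (Cmap f) n e' \<ge> 1" using sep_ge1[of e' n] assms elim by simp
    have "ln (sep dH CS1 (Cmap f) n e') \<le> ln (sep dH CS1 (Cmap f) n e)"
      using s1 sep_mono[OF assms elim] by (subst ln_le_cancel_iff) auto
    then have "ln (sep dH CS1 (Cmap f) n e') / ln (real n) \<le> ln (sep dH CS1 (Cmap f) n e) / ln (real n)"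
      using elim by (intro divide_right_mono) auto
    then show ?case by simp
  qed
qed

lemma hpol_le2: "h_pol dH CS1 (Cmap f) \<le> 2"
proof -
  have eq: "(\<lambda>e. limsup (\<lambda>n. ereal (ln (sep dH CS1 (Cmap f) n e) / ln (real n)))) = phi"
    by (rule ext) (simp add: phi_def)
  define L where "L = (SUP e\<in>{0<..}. phi e)"
  have lim: "(phi \<longlongrightarrow> L) (at_right 0)"
  proof (rule order_tendstoI)
    fix y assume "y < L"
    then obtain e0 where e0: "e0 > 0" "y < phi e0" unfolding L_def less_SUP_iff by auto
    show "eventually (\<lambda>e. y < phi e) (at_right 0)"
      unfolding eventually_at_right_field
      using e0 phi_anti by (intro exI[of _ e0]) (auto intro: less_le_trans)
  next
    fix y assume "L < y"
    show "eventually (\<lambda>e. phi e < y) (at_right 0)"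
      unfolding eventually_at_right_field
      using \<open>L < y\<close> by (intro exI[of _ 1]) (auto simp: L_def intro: le_less_trans[OF SUP_upper])
  qed
  have "h_pol dH CS1 (Cmap f) = L"
    unfolding h_pol_def eq by (rule tendsto_Lim[OF trivial_limit_at_right_real lim])
  also have "L \<le> 2" unfolding L_def using phi_le2 by (auto intro: SUP_least)
  finally show ?thesis .
qed

end

theorem proposition1:
  fixes f :: "complex \<Rightarrow> complex"
  assumes "orient_pres_homeo f"
  shows "h_pol dH CS1 (Cmap f) \<le> 2"
proof -
  obtain F :: "real \<Rightarrow> real" where F: "strict_mono F" "\<And>x. F (x + 1) = F x + 1"
    "\<And>x. f (cis (2 * pi * x)) = cis (2 * pi * F x)"
    using assms unfolding orient_pres_homeo_def by blast
  interpret lifted f F using F by unfold_locales auto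
  show ?thesis by (rule hpol_le2)
qed

end
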